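(* Let $\mathbf{T}\in\mathbb{R}^{n\ell\times n\ell}$ be symmetric positive definite and suppose $\mathbf{T}=\mathbf{I}_\ell\otimes\mathbf{T}_0+\sum_{k=1}^p\mathbf{E}_k\otimes\mathbf{T}_k$ with $\mathbf{T}_0\in\mathbb{R}^{n\times n}$ symmetric positive definite, $\mathbf{T}_k\in\mathbb{R}^{n\times n}$, and $\mathbf{E}_k\in\mathbb{R}^{\ell\times\ell}$ as in the context. Let $\mathbf{T}_0=\mathbf{L}\mathbf{L}^\top$ be its Cholesky factorization, set $\mathbf{A}_k=\mathbf{L}^{-1}\mathbf{T}_k\mathbf{L}^{-\top}$ and $\mathbf{A}=\sum_{k=1}^p\mathbf{E}_k\otimes\mathbf{A}_k$. Let $\mathcal{X}\in\mathbb{R}^{n\times p\times n}$ be the tensor with $\mathcal{X}_{i,k,j}=(\mathbf{A}_k)_{ij}$, let $\mathbf{U}\in\mathbb{R}^{n\times r}$ have orthonormal columns, and define $\mathcal{G}=\mathcal{X}\times_1\mathbf{U}^\top\times_3\mathbf{U}^\top$ and $\mathcal{T}=\mathcal{G}\times_1\mathbf{U}\times_3\mathbf{U}$. Then the matrix \[\widehat{\mathbf{T}}=(\mathbf{I}_\ell\otimes\mathbf{L})\big(\mathbf{I}+\mathcal{M}_{\mathcal{E}}[\mathcal{T}]\big)(\mathbf{I}_\ell\otimes\mathbf{L}^\top)\] is symmetric positive definite.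
   Context: The matrices $\mathbf{E}_1,\dots,\mathbf{E}_p\in\mathbb{R}^{\ell\times\ell}$ are position matrices: $\mathbf{E}_k$ has entries in $\{0,1/\sqrt{\eta_k}\}$ where $\eta_k\ge1$ is the number of its nonzero entries, and the supports of distinct $\mathbf{E}_k$ are disjoint. For a tensor $\mathcal{Y}\in\mathbb{R}^{n\times p\times n}$, $\mathrm{sq}(\mathcal{Y}_{:,k,:})$ is the $n\times n$ matrix with entries $\mathcal{Y}_{i,k,j}$ and $\mathcal{M}_{\mathcal{E}}[\mathcal{Y}]=\sum_{k=1}^p\mathbf{E}_k\otimes\mathrm{sq}(\mathcal{Y}_{:,k,:})$. The mode-$i$ product $\mathcal{Y}\times_i\mathbf{M}$ multiplies every mode-$i$ fiber of $\mathcal{Y}$ by $\mathbf{M}$, i.e. $(\mathcal{Y}\times_1\mathbf{M})_{a,k,j}=\sum_i\mathbf{M}_{ai}\mathcal{Y}_{i,k,j}$ and $(\mathcal{Y}\times_3\mathbf{M})_{i,k,b}=\sum_j\mathbf{M}_{bj}\mathcal{Y}_{i,k,j}$. The Kronecker product $\mathbf{B}\otimes\mathbf{C}$ has $(i,j)$ block $b_{ij}\mathbf{C}$; $\mathbf{L}^{-\top}=(\mathbf{L}^{-1})^\top$. *)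

theory Defs
  imports "HOL-Analysis.Analysis"
begin

text \<open>Matrices are HOL-Analysis matrices real^cols^rows. Index sets of size n, l, p, r
are arbitrary finite types 'n, 'l, 'p, 'r. The index of an (n l) x (n l) matrix is the
pair type 'l \<times> 'n, where (i,a) is row a of block-row i.\<close>

definition kron :: "real^'j^'i \<Rightarrow> real^'b^'a \<Rightarrow> real^('j \<times> 'b)^('i \<times> 'a)" where
  "kron B C = (\<chi> r c. B $ fst r $ fst c * C $ snd r $ snd c)"

definition sym_posdef :: "real^'m^'m \<Rightarrow> bool" where
  "sym_posdef M \<longleftrightarrow> transpose M = M \<and> (\<forall>x. x \<noteq> 0 \<longrightarrow> x \<bullet> (M *v x) > 0)"

definition lower_triangular :: "real^'n::{finite,linorder}^'n::{finite,linorder} \<Rightarrow> bool" where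
  "lower_triangular L \<longleftrightarrow> (\<forall>i j. i < j \<longrightarrow> L $ i $ j = 0)"

definition cholesky_factor :: "real^'n::{finite,linorder}^'n::{finite,linorder} \<Rightarrow> real^'n::{finite,linorder}^'n::{finite,linorder} \<Rightarrow> bool" where
  "cholesky_factor L T0 \<longleftrightarrow> lower_triangular L \<and> (\<forall>i. L $ i $ i > 0) \<and> T0 = L ** transpose L"

definition nnz :: "real^'l^'l \<Rightarrow> nat" where
  "nnz E = card {(i,j). E $ i $ j \<noteq> 0}"

definition position_matrix :: "real^'l^'l \<Rightarrow> bool" where
  "position_matrix E \<longleftrightarrow> nnz E \<ge> 1 \<and>
     (\<forall>i j. E $ i $ j = 0 \<or> E $ i $ j = 1 / sqrt (real (nnz E)))"

definition disjoint_supports :: "('p \<Rightarrow> real^'l^'l) \<Rightarrow> bool" where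
  "disjoint_supports E \<longleftrightarrow> (\<forall>k k' i j. k \<noteq> k' \<longrightarrow> E k $ i $ j = 0 \<or> E k' $ i $ j = 0)"

text \<open>Third-order tensors Y in R^{a x p x c} as functions Y i k j.\<close>
definition sq :: "('a \<Rightarrow> 'p \<Rightarrow> 'c \<Rightarrow> real) \<Rightarrow> 'p \<Rightarrow> real^'c^'a" where
  "sq Y k = (\<chi> i j. Y i k j)"

definition ME :: "('p::finite \<Rightarrow> real^'l^'l) \<Rightarrow> ('n::finite \<Rightarrow> 'p \<Rightarrow> 'n \<Rightarrow> real) \<Rightarrow> real^('l \<times> 'n)^('l \<times> 'n)" where
  "ME E Y = (\<Sum>k\<in>UNIV. kron (E k) (sq Y k))"

definition mode1 :: "('a \<Rightarrow> 'p \<Rightarrow> 'c \<Rightarrow> real) \<Rightarrow> real^'a^'m \<Rightarrow> ('m \<Rightarrow> 'p \<Rightarrow> 'c \<Rightarrow> real)" where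
  "mode1 Y M = (\<lambda>a k j. \<Sum>i\<in>UNIV. M $ a $ i * Y i k j)"

definition mode3 :: "('a \<Rightarrow> 'p \<Rightarrow> 'c \<Rightarrow> real) \<Rightarrow> real^'c^'m \<Rightarrow> ('a \<Rightarrow> 'p \<Rightarrow> 'm \<Rightarrow> real)" where
  "mode3 Y M = (\<lambda>i k b. \<Sum>j\<in>UNIV. M $ b $ j * Y i k j)"

end

theory Submission
  imports Defs
begin

lemma kron_mult: "kron A B ** kron C D = kron (A ** C) (B ** D)"
proof -
  have "\<And>r c. (\<Sum>k\<in>UNIV. A $ fst r $ fst k * B $ snd r $ snd k * (C $ fst k $ fst c * D $ snd k $ snd c))
     = (\<Sum>i\<in>UNIV. A $ fst r $ i * C $ i $ fst c) * (\<Sum>a\<in>UNIV. B $ snd r $ a * D $ a $ snd c)"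
    by (simp add: sum_product UNIV_Times_UNIV[symmetric] sum.cartesian_product split_def mult_ac del: UNIV_Times_UNIV)
  then show ?thesis by (simp add: kron_def matrix_matrix_mult_def vec_eq_iff)
qed

lemma kron_transpose: "transpose (kron A B) = kron (transpose A) (transpose B)"
  by (simp add: kron_def transpose_def vec_eq_iff)

lemma kron_add2: "kron A (B + C) = kron A B + kron A C"
  by (simp add: kron_def vec_eq_iff algebra_simps)

lemma kron_mat1: "kron (mat 1) (mat 1) = mat 1"
  by (simp add: kron_def mat_def vec_eq_iff prod_eq_iff)

lemma mult_sum_right: "A ** (\<Sum>k\<in>S. f k) = (\<Sum>k\<in>S. A ** f k)"
  by (induction S rule: infinite_finite_induct) (auto simp: matrix_add_ldistrib)
lemma matrix_add_rdistrib': "((B + C) ** A) = (B ** A) + (C ** A)"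
  by (vector matrix_matrix_mult_def sum.distrib[symmetric] field_simps)
lemma mult_sum_left: "(\<Sum>k\<in>S. f k) ** A = (\<Sum>k\<in>S. f k ** A)"
  by (induction S rule: infinite_finite_induct) (auto simp: matrix_add_rdistrib')
lemma transpose_sum: "transpose (\<Sum>k\<in>S. f k) = (\<Sum>k\<in>S. transpose (f k))"
  by (induction S rule: infinite_finite_induct) (auto simp: transpose_def vec_eq_iff)

lemma sq_mode1: "sq (mode1 Y M) k = M ** sq Y k"
  by (simp add: sq_def mode1_def matrix_matrix_mult_def)
lemma sq_mode3: "sq (mode3 Y M) k = sq Y k ** transpose M"
  by (simp add: sq_def mode3_def matrix_matrix_mult_def transpose_def mult.commute)

lemma inner_mv: "(x::real^'n) \<bullet> (A *v y) = (transpose A *v x) \<bullet> y"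
  by (metis dot_lmul_matrix transpose_matrix_vector)


declare transpose_matrix_vector[simp del]

lemma congr_spd:
  fixes S :: "real^'m^'m" and C :: "real^'m^'k" and D :: "real^'m^'k"
  assumes "sym_posdef S" "D ** transpose C = mat 1"
  shows "sym_posdef (C ** S ** transpose C)"
  unfolding sym_posdef_def
proof (intro conjI allI impI)
  show "transpose (C ** S ** transpose C) = C ** S ** transpose C"
    using assms(1) by (simp add: sym_posdef_def matrix_transpose_mul matrix_mul_assoc)
  fix x :: "real^'k" assume "x \<noteq> 0"
  define y where "y = transpose C *v x"
  have "D *v y = x" using assms(2) by (simp add: y_def matrix_vector_mul_assoc)
  then have "y \<noteq> 0" using \<open>x \<noteq> 0\<close> by auto
  then have "y \<bullet> (S *v y) > 0" using assms(1) by (simp add: sym_posdef_def)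
  moreover have "x \<bullet> ((C ** S ** transpose C) *v x) = y \<bullet> (S *v y)"
    by (simp add: y_def matrix_vector_mul_assoc[symmetric] inner_mv[of x C])
  ultimately show "x \<bullet> ((C ** S ** transpose C) *v x) > 0" by simp
qed

lemma sq_X: "sq (\<lambda>i k j. A k $ i $ j) k = A k"
  by (simp add: sq_def vec_eq_iff)

theorem theorem5p2:
  fixes T :: "real^('l::finite \<times> 'n::{finite,linorder})^('l::finite \<times> 'n::{finite,linorder})"
    and T0 L :: "real^'n::{finite,linorder}^'n::{finite,linorder}"
    and Tk :: "'p::finite \<Rightarrow> real^'n::{finite,linorder}^'n::{finite,linorder}"
    and E :: "'p \<Rightarrow> real^'l::finite^'l::finite"
    and U :: "real^'r::finite^'n::{finite,linorder}"
  assumes "sym_posdef T"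
    and "T = kron (mat 1) T0 + (\<Sum>k\<in>UNIV. kron (E k) (Tk k))"
    and "sym_posdef T0"
    and "\<forall>k. position_matrix (E k)"
    and "disjoint_supports E"
    and "cholesky_factor L T0"
    and "transpose U ** U = mat 1"
  shows "let A = (\<lambda>k. matrix_inv L ** Tk k ** transpose (matrix_inv L));
             X = (\<lambda>i k j. A k $ i $ j);
             G = mode3 (mode1 X (transpose U)) (transpose U);
             TT = mode3 (mode1 G U) U
         in sym_posdef (kron (mat 1 :: real^'l::finite^'l::finite) L ** (mat 1 + ME E TT)
                         ** kron (mat 1 :: real^'l::finite^'l::finite) (transpose L))"
proof -
  define Li where "Li = matrix_inv L"
  define A where "A = (\<lambda>k. Li ** Tk k ** transpose Li)"
  define G where "G = mode3 (mode1 (\<lambda>i k j. A k $ i $ j) (transpose U)) (transpose U)"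
  define TT where "TT = mode3 (mode1 G U) U"
  have T0L: "T0 = L ** transpose L" using assms(6) by (simp add: cholesky_factor_def)
  have "\<forall>x. transpose L *v x = 0 \<longrightarrow> x = 0"
  proof (intro allI impI)
    fix x assume h: "transpose L *v x = 0"
    have "x \<bullet> (T0 *v x) = 0"
      by (simp add: T0L matrix_vector_mul_assoc[symmetric] inner_mv[of x L] h)
    then show "x = 0" using assms(3) unfolding sym_posdef_def by force
  qed
  then have "invertible (transpose L)"
    using matrix_left_invertible_ker invertible_left_inverse by blast
  then have "invertible L" by (metis invertible_def matrix_transpose_mul transpose_mat transpose_transpose)
  then have LLi: "L ** Li = mat 1" and LiL: "Li ** L = mat 1"
    unfolding Li_def matrix_inv_def invertible_def by (metis (mono_tags, lifting) someI_ex)+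
  define I where "I = (mat 1 :: real^'l^'l)"
  define K where "K = kron I L"
  define Ki where "Ki = kron I Li"
  have KKi: "K ** Ki = mat 1" by (simp add: K_def Ki_def I_def kron_mult LLi kron_mat1)
  have KiK: "Ki ** K = mat 1" by (simp add: K_def Ki_def I_def kron_mult LiL kron_mat1)
  define S where "S = Ki ** T ** transpose Ki"
  have "transpose K ** transpose Ki = mat 1" by (metis KiK matrix_transpose_mul transpose_mat)
  then have Sspd: "sym_posdef S" unfolding S_def using congr_spd assms(1) by blast
  define Aall where "Aall = (\<Sum>k\<in>UNIV. kron (E k) (A k))"
  have tKi: "transpose Ki = kron I (transpose Li)" by (simp add: Ki_def kron_transpose I_def)
  have "Li ** T0 ** transpose Li = (Li ** L) ** transpose (Li ** L)"
    by (simp add: T0L matrix_transpose_mul matrix_mul_assoc)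
  then have "Li ** T0 ** transpose Li = mat 1" by (simp add: LiL)
  then have e1: "Ki ** kron I T0 ** transpose Ki = mat 1"
    unfolding tKi by (simp add: Ki_def kron_mult I_def kron_mat1)
  have e2: "Ki ** kron (E k) (Tk k) ** transpose Ki = kron (E k) (A k)" for k
    unfolding tKi by (simp add: Ki_def kron_mult I_def A_def)
  have SA: "S = mat 1 + Aall"
    by (simp add: S_def assms(2) matrix_add_ldistrib matrix_add_rdistrib' mult_sum_right mult_sum_left
        e1 e2 Aall_def flip: I_def)
  have Asym: "transpose Aall = Aall"
  proof -
    have "transpose S = S" using Sspd by (simp add: sym_posdef_def)
    moreover have "transpose (mat 1 + Aall) = mat 1 + transpose Aall"
      by (simp add: transpose_def vec_eq_iff mat_def)
    ultimately show ?thesis by (simp add: SA)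
  qed
  define P where "P = U ** transpose U"
  define KP where "KP = kron I P"
  have tP: "transpose P = P" by (simp add: P_def matrix_transpose_mul)
  have PP: "P ** P = P" unfolding P_def by (metis assms(7) matrix_mul_assoc matrix_mul_rid)
  have tKP: "transpose KP = KP" by (simp add: KP_def kron_transpose tP I_def)
  have KPKP: "KP ** KP = KP" by (simp add: KP_def kron_mult PP I_def)
  have "ME E TT = (\<Sum>k\<in>UNIV. KP ** kron (E k) (A k) ** KP)"
    unfolding ME_def
  proof (rule sum.cong[OF refl])
    fix k
    have "sq TT k = P ** A k ** P"
      by (simp add: TT_def G_def sq_mode1 sq_mode3 sq_X P_def matrix_mul_assoc)
    then show "kron (E k) (sq TT k) = KP ** kron (E k) (A k) ** KP"
      by (simp add: KP_def kron_mult I_def)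
  qed
  then have MEA: "ME E TT = KP ** Aall ** KP"
    by (simp add: Aall_def mult_sum_left mult_sum_right)
  define Mid where "Mid = mat 1 + KP ** Aall ** KP"
  have Midspd: "sym_posdef Mid"
    unfolding sym_posdef_def
  proof (intro conjI allI impI)
    have "transpose (KP ** Aall ** KP) = KP ** Aall ** KP"
      by (simp add: matrix_transpose_mul tKP Asym matrix_mul_assoc)
    moreover have "transpose (mat 1 + KP ** Aall ** KP) = mat 1 + transpose (KP ** Aall ** KP)"
      by (simp add: transpose_def vec_eq_iff mat_def)
    ultimately show "transpose Mid = Mid" by (simp add: Mid_def)
  next
    fix y :: "real^('l \<times> 'n)" assume "y \<noteq> 0"
    define z where "z = KP *v y"
    define w where "w = y - z"
    have zz: "z \<bullet> z = z \<bullet> y"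
      by (simp add: z_def inner_mv[of "KP *v y" KP] tKP matrix_vector_mul_assoc KPKP inner_commute)
    have yy: "y \<bullet> y = z \<bullet> z + w \<bullet> w"
      by (simp add: w_def inner_diff_left inner_diff_right zz inner_commute)
    have "y \<bullet> (Mid *v y) = y \<bullet> y + z \<bullet> (Aall *v z)"
      by (simp add: Mid_def matrix_vector_mult_add_rdistrib inner_add_right
          matrix_vector_mul_assoc[symmetric] inner_mv[of y KP] tKP z_def)
    also have "Aall *v z = S *v z - z" by (simp add: SA matrix_vector_mult_add_rdistrib)
    finally have eq: "y \<bullet> (Mid *v y) = w \<bullet> w + z \<bullet> (S *v z)"
      by (simp add: yy inner_diff_right)
    show "y \<bullet> (Mid *v y) > 0"
    proof (cases "z = 0")
      case True
      then show ?thesis using eq \<open>y \<noteq> 0\<close> w_def by simp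
    next
      case False
      then have "z \<bullet> (S *v z) > 0" using Sspd by (simp add: sym_posdef_def)
      then show ?thesis using eq by (metis add_nonneg_pos inner_ge_zero)
    qed
  qed
  have "transpose Ki ** transpose K = mat 1" by (metis KKi matrix_transpose_mul transpose_mat)
  then have "sym_posdef (K ** Mid ** transpose K)" using congr_spd Midspd by blast
  moreover have "transpose K = kron I (transpose L)" by (simp add: K_def kron_transpose I_def)
  ultimately have main: "sym_posdef (kron I L ** (mat 1 + ME E TT) ** kron I (transpose L))"
    by (simp add: K_def Mid_def MEA)
  show ?thesis unfolding Let_def using main by (simp add: TT_def G_def A_def Li_def I_def)
qed

end
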